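(* For every $m\ge 0$, the sum of $\varsigma(\mathcal M_\bullet)$ over all rooted maps $\mathcal M_\bullet$ with $m$ edges (one from each isomorphism class of rooted maps) equals $\frac{(2m)!}{m!}$, where $\varsigma(\mathcal M_\bullet)$ is the number of quasi-trees of $\mathcal M_\bullet$.
   Context: A map is a triple $\mathcal M=(B,\sigma,\alpha)$ with $B$ finite, $\sigma,\alpha\in\mathrm{Sym}(B)$, $\alpha$ a fixed-point-free involution, $\langle\sigma,\alpha\rangle$ transitive on $B$. Edges are the cycles of $\alpha$; $\underline b=\{b,\alpha(b)\}$. A rooted map is a map together with a distinguished flag $b_\bullet\in B$; two rooted maps are isomorphic if there is a bijection between their flag sets conjugating the respective $\sigma$'s and $\alpha$'s and mapping root to root. The tour of a set $F$ of edges is $\tau$ with $\tau(b)=\sigma(\alpha(b))$ if $\underline b\in F$ and $\tau(b)=\sigma(b)$ otherwise; a quasi-tree is a set of edges whose tour is a single cycle on $B$. *)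

theory Defs
  imports Complex_Main "HOL-Combinatorics.Permutations"
begin

definition is_map :: "'a set \<Rightarrow> ('a \<Rightarrow> 'a) \<Rightarrow> ('a \<Rightarrow> 'a) \<Rightarrow> bool" where
  "is_map B \<sigma> \<alpha> \<longleftrightarrow> finite B \<and> \<sigma> permutes B \<and> \<alpha> permutes B \<and>
     (\<forall>b\<in>B. \<alpha> (\<alpha> b) = b \<and> \<alpha> b \<noteq> b) \<and>
     (\<forall>x\<in>B. \<forall>y\<in>B. (x, y) \<in> ({(b, \<sigma> b) | b. b \<in> B} \<union> {(b, inv \<sigma> b) | b. b \<in> B}
                                   \<union> {(b, \<alpha> b) | b. b \<in> B})\<^sup>*)"

text \<open>Rooted map: a map with a distinguished flag in B. Convention: the map with no flags
(zero edges, the vertex map) counts as a rooted map, with a dummy root.\<close>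

definition is_rooted_map :: "'a set \<Rightarrow> ('a \<Rightarrow> 'a) \<Rightarrow> ('a \<Rightarrow> 'a) \<Rightarrow> 'a \<Rightarrow> bool" where
  "is_rooted_map B \<sigma> \<alpha> r \<longleftrightarrow> is_map B \<sigma> \<alpha> \<and> (r \<in> B \<or> B = {})"

definition rooted_map_iso ::
  "'a set \<Rightarrow> ('a \<Rightarrow> 'a) \<Rightarrow> ('a \<Rightarrow> 'a) \<Rightarrow> 'a \<Rightarrow> 'b set \<Rightarrow> ('b \<Rightarrow> 'b) \<Rightarrow> ('b \<Rightarrow> 'b) \<Rightarrow> 'b \<Rightarrow> bool" where
  "rooted_map_iso B \<sigma> \<alpha> r B' \<sigma>' \<alpha>' r' \<longleftrightarrow>
     (\<exists>\<phi>. bij_betw \<phi> B B' \<and> (\<forall>b\<in>B. \<phi> (\<sigma> b) = \<sigma>' (\<phi> b) \<and> \<phi> (\<alpha> b) = \<alpha>' (\<phi> b)) \<and>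
          (B \<noteq> {} \<longrightarrow> \<phi> r = r'))"

definition map_edges :: "'a set \<Rightarrow> ('a \<Rightarrow> 'a) \<Rightarrow> 'a set set" where
  "map_edges B \<alpha> = {{b, \<alpha> b} | b. b \<in> B}"

definition tour :: "('a \<Rightarrow> 'a) \<Rightarrow> ('a \<Rightarrow> 'a) \<Rightarrow> 'a set set \<Rightarrow> 'a \<Rightarrow> 'a" where
  "tour \<sigma> \<alpha> F b = (if {b, \<alpha> b} \<in> F then \<sigma> (\<alpha> b) else \<sigma> b)"

definition single_cycle_on :: "'a set \<Rightarrow> ('a \<Rightarrow> 'a) \<Rightarrow> bool" where
  "single_cycle_on B \<tau> \<longleftrightarrow> (\<forall>x\<in>B. \<forall>y\<in>B. \<exists>n. (\<tau> ^^ n) x = y)"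

definition quasi_trees :: "'a set \<Rightarrow> ('a \<Rightarrow> 'a) \<Rightarrow> ('a \<Rightarrow> 'a) \<Rightarrow> 'a set set set" where
  "quasi_trees B \<sigma> \<alpha> = {F. F \<subseteq> map_edges B \<alpha> \<and> single_cycle_on B (tour \<sigma> \<alpha> F)}"

text \<open>Every rooted map with m edges has 2m flags and is isomorphic to one on the flag set
{0..<2m}; the isomorphism classes of rooted maps with m edges are thus the classes of the
following set under rooted-map isomorphism.\<close>

definition rooted_maps_std :: "nat \<Rightarrow> ((nat \<Rightarrow> nat) \<times> (nat \<Rightarrow> nat) \<times> nat) set" where
  "rooted_maps_std m = {(\<sigma>, \<alpha>, r). is_rooted_map {0..<2*m} \<sigma> \<alpha> r}"

definition rooted_map_iso_rel :: "nat \<Rightarrow> (((nat \<Rightarrow> nat) \<times> (nat \<Rightarrow> nat) \<times> nat) \<times> ((nat \<Rightarrow> nat) \<times> (nat \<Rightarrow> nat) \<times> nat)) set" where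
  "rooted_map_iso_rel m = {((\<sigma>, \<alpha>, r), (\<sigma>', \<alpha>', r')).
      (\<sigma>, \<alpha>, r) \<in> rooted_maps_std m \<and> (\<sigma>', \<alpha>', r') \<in> rooted_maps_std m \<and>
      rooted_map_iso {0..<2*m} \<sigma> \<alpha> r {0..<2*m} \<sigma>' \<alpha>' r'}"

definition varsigma :: "nat \<Rightarrow> (nat \<Rightarrow> nat) \<times> (nat \<Rightarrow> nat) \<times> nat \<Rightarrow> nat" where
  "varsigma m M = (case M of (\<sigma>, \<alpha>, r) \<Rightarrow> card (quasi_trees {0..<2*m} \<sigma> \<alpha>))"

end

theory Submission
  imports Defs
begin

definition invols :: "'a set \<Rightarrow> ('a \<Rightarrow> 'a) set" where
  "invols B = {\<alpha>. \<alpha> permutes B \<and> (\<forall>b\<in>B. \<alpha> (\<alpha> b) = b \<and> \<alpha> b \<noteq> b)}"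

fun dfact :: "nat \<Rightarrow> nat" where
  "dfact 0 = 1" | "dfact (Suc k) = (2*k+1) * dfact k"

lemma invols_finite: "finite B \<Longrightarrow> finite (invols B)"
  by (rule finite_subset[OF _ finite_permutations[of B]]) (auto simp: invols_def)

lemma invols_split:
  assumes "a \<in> B" "b \<in> B" "a \<noteq> b"
  shows "{\<alpha> \<in> invols B. \<alpha> a = b} = (\<lambda>\<alpha>. Transposition.transpose a b \<circ> \<alpha>) ` invols (B - {a,b})"
proof
  show "{\<alpha> \<in> invols B. \<alpha> a = b} \<subseteq> (\<lambda>\<alpha>. Transposition.transpose a b \<circ> \<alpha>) ` invols (B - {a,b})"
  proof
    fix \<alpha> assume "\<alpha> \<in> {\<alpha> \<in> invols B. \<alpha> a = b}"
    then have p: "\<alpha> permutes B" and inv: "\<forall>x\<in>B. \<alpha> (\<alpha> x) = x \<and> \<alpha> x \<noteq> x" and ab: "\<alpha> a = b"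
      by (auto simp: invols_def)
    have "\<alpha> (\<alpha> a) = a" using inv assms(1) by blast
    then have ba: "\<alpha> b = a" using ab by simp
    define \<beta> where "\<beta> = Transposition.transpose a b \<circ> \<alpha>"
    have oth: "\<alpha> x \<noteq> a \<and> \<alpha> x \<noteq> b" if "x \<in> B - {a,b}" for x
    proof -
      have "\<alpha> (\<alpha> x) = x" using that inv by blast
      then show ?thesis using that ab ba by auto
    qed
    have bo: "\<beta> x = \<alpha> x" if "x \<in> B - {a,b}" for x
      using oth[OF that] by (simp add: \<beta>_def)
    have "\<beta> permutes B" unfolding \<beta>_def
      by (rule permutes_compose[OF p permutes_swap_id[OF assms(1,2)]])
    then have "\<beta> permutes B - {a,b}"
      by (rule permutes_superset) (auto simp: \<beta>_def ab ba)
    moreover have "\<forall>x\<in>B - {a,b}. \<beta> (\<beta> x) = x \<and> \<beta> x \<noteq> x"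
    proof
      fix x assume x: "x \<in> B - {a,b}"
      have "\<alpha> x \<in> B - {a,b}" using oth[OF x] permutes_in_image[OF p] x by auto
      then show "\<beta> (\<beta> x) = x \<and> \<beta> x \<noteq> x" using bo x inv by auto
    qed
    ultimately have "\<beta> \<in> invols (B - {a,b})" by (simp add: invols_def)
    moreover have "\<alpha> = Transposition.transpose a b \<circ> \<beta>"
      by (simp add: \<beta>_def fun_eq_iff)
    ultimately show "\<alpha> \<in> (\<lambda>\<alpha>. Transposition.transpose a b \<circ> \<alpha>) ` invols (B - {a,b})" by blast
  qed
next
  show "(\<lambda>\<alpha>. Transposition.transpose a b \<circ> \<alpha>) ` invols (B - {a,b}) \<subseteq> {\<alpha> \<in> invols B. \<alpha> a = b}"
  proof
    fix \<alpha> assume "\<alpha> \<in> (\<lambda>\<alpha>. Transposition.transpose a b \<circ> \<alpha>) ` invols (B - {a,b})"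
    then obtain \<beta> where \<beta>: "\<beta> \<in> invols (B - {a,b})" and a_def: "\<alpha> = Transposition.transpose a b \<circ> \<beta>"
      by auto
    have p: "\<beta> permutes B - {a,b}" and inv: "\<forall>x\<in>B-{a,b}. \<beta> (\<beta> x) = x \<and> \<beta> x \<noteq> x"
      using \<beta> by (auto simp: invols_def)
    have pa: "\<beta> a = a" "\<beta> b = b" using p by (auto simp: permutes_not_in)
    have pB: "\<beta> permutes B" by (rule permutes_subset[OF p]) auto
    have "\<alpha> permutes B" unfolding a_def
      by (rule permutes_compose[OF pB permutes_swap_id[OF assms(1,2)]])
    moreover have "\<forall>x\<in>B. \<alpha> (\<alpha> x) = x \<and> \<alpha> x \<noteq> x"
    proof
      fix x assume x: "x \<in> B"
      show "\<alpha> (\<alpha> x) = x \<and> \<alpha> x \<noteq> x"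
      proof (cases "x \<in> {a,b}")
        case True then show ?thesis using pa assms by (auto simp: a_def)
      next
        case False
        then have "\<beta> x \<in> B - {a,b}" using permutes_in_image[OF p] x by auto
        then show ?thesis using inv x False by (auto simp: a_def)
      qed
    qed
    moreover have "\<alpha> a = b" using pa by (simp add: a_def)
    ultimately show "\<alpha> \<in> {\<alpha> \<in> invols B. \<alpha> a = b}" by (simp add: invols_def)
  qed
qed

lemma card_invols: "finite B \<Longrightarrow> card B = 2*k \<Longrightarrow> card (invols B) = dfact k"
proof (induction k arbitrary: B)
  case 0
  then have "B = {}" by auto
  then have "invols B = {id}" by (auto simp: invols_def)
  then show ?case by simp
next
  case (Suc k)
  then obtain a where a: "a \<in> B" by fastforce
  have "\<alpha> a \<in> B - {a}" if "\<alpha> \<in> invols B" for \<alpha>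
    using that a by (auto simp: invols_def permutes_in_image)
  then have eq: "invols B = (\<Union>b\<in>B-{a}. {\<alpha> \<in> invols B. \<alpha> a = b})" by blast
  have "card (\<Union>b\<in>B-{a}. {\<alpha> \<in> invols B. \<alpha> a = b}) = (\<Sum>b\<in>B-{a}. card {\<alpha> \<in> invols B. \<alpha> a = b})"
    by (rule card_UN_disjoint) (auto simp: Suc.prems intro: finite_subset[OF _ invols_finite[OF Suc.prems(1)]])
  then have "card (invols B) = (\<Sum>b\<in>B-{a}. card {\<alpha> \<in> invols B. \<alpha> a = b})"
    using eq by simp
  also have "\<dots> = (\<Sum>b\<in>B-{a}. dfact k)"
  proof (rule sum.cong[OF refl])
    fix b assume b: "b \<in> B - {a}"
    have inj: "inj (\<lambda>\<alpha>::'a\<Rightarrow>'a. Transposition.transpose a b \<circ> \<alpha>)"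
    proof (rule injI)
      fix x y :: "'a \<Rightarrow> 'a"
      assume "Transposition.transpose a b \<circ> x = Transposition.transpose a b \<circ> y"
      then have "\<And>z. Transposition.transpose a b (x z) = Transposition.transpose a b (y z)"
        by (metis comp_apply)
      then show "x = y" by (auto intro: transpose_eq_imp_eq)
    qed
    have "card {\<alpha> \<in> invols B. \<alpha> a = b} = card (invols (B - {a,b}))"
      using invols_split[OF a, of b] b card_image[OF inj_on_subset[OF inj, of "invols (B - {a,b})"]]
      by auto
    also have "\<dots> = dfact k"
      using b a Suc by (intro Suc.IH) (auto simp: card_Diff_subset)
    finally show "card {\<alpha> \<in> invols B. \<alpha> a = b} = dfact k" .
  qed
  also have "\<dots> = (2*k+1) * dfact k" using a Suc.prems by simp
  finally show ?case by simp
qed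

lemma card_edges:
  assumes "finite B" "\<alpha> \<in> invols B"
  shows "2 * card (map_edges B \<alpha>) = card B"
proof -
  have inv: "\<forall>x\<in>B. \<alpha> (\<alpha> x) = x \<and> \<alpha> x \<noteq> x" and p: "\<alpha> permutes B"
    using assms by (auto simp: invols_def)
  have U: "\<Union>(map_edges B \<alpha>) = B"
    using permutes_in_image[OF p] by (auto simp: map_edges_def)
  have "2 * card (map_edges B \<alpha>) = card (\<Union>(map_edges B \<alpha>))"
  proof (rule card_partition)
    show "finite (map_edges B \<alpha>)" using assms(1) by (simp add: map_edges_def)
    show "finite (\<Union>(map_edges B \<alpha>))" using U assms by simp
    show "\<And>c. c \<in> map_edges B \<alpha> \<Longrightarrow> card c = 2" using inv by (auto simp: map_edges_def)
    show "\<And>c1 c2. c1 \<in> map_edges B \<alpha> \<Longrightarrow> c2 \<in> map_edges B \<alpha> \<Longrightarrow> c1 \<noteq> c2 \<Longrightarrow> c1 \<inter> c2 = {}"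
    proof -
      fix c1 c2 assume c: "c1 \<in> map_edges B \<alpha>" "c2 \<in> map_edges B \<alpha>" "c1 \<noteq> c2"
      have key: "{x, \<alpha> x} = {z, \<alpha> z}" if "x \<in> B" "z \<in> {x, \<alpha> x}" for x z
        using that inv by auto
      show "c1 \<inter> c2 = {}"
      proof (rule ccontr)
        assume "c1 \<inter> c2 \<noteq> {}"
        then obtain z where "z \<in> c1" "z \<in> c2" by blast
        moreover obtain x y where "x \<in> B" "c1 = {x, \<alpha> x}" "y \<in> B" "c2 = {y, \<alpha> y}"
          using c by (auto simp: map_edges_def)
        ultimately show False using key c(3) by metis
      qed
    qed
  qed
  then show ?thesis using U by simp
qed


lemma funpow_apply_add: "(f ^^ (m + n)) x = (f ^^ m) ((f ^^ n) x)"
  by (simp add: funpow_add)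

lemma conj_funpow:
  assumes "\<phi> permutes B"
  shows "((\<phi> \<circ> \<tau> \<circ> inv \<phi>) ^^ k) = \<phi> \<circ> (\<tau> ^^ k) \<circ> inv \<phi>"
proof (induction k)
  case 0 then show ?case using permutes_inv_o(1)[OF assms] by (simp add: fun_eq_iff permutes_inverses[OF assms])
next
  case (Suc k) then show ?case by (simp add: fun_eq_iff permutes_inverses[OF assms])
qed

lemma single_cycle_conj:
  assumes "\<phi> permutes B" "single_cycle_on B \<tau>"
  shows "single_cycle_on B (\<phi> \<circ> \<tau> \<circ> inv \<phi>)"
  unfolding single_cycle_on_def
proof (intro ballI)
  fix x y assume xy: "x \<in> B" "y \<in> B"
  have "inv \<phi> x \<in> B" "inv \<phi> y \<in> B"
    using xy permutes_in_image[OF permutes_inv[OF assms(1)]] by auto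
  then obtain k where "(\<tau> ^^ k) (inv \<phi> x) = inv \<phi> y" using assms(2) unfolding single_cycle_on_def by blast
  then have "((\<phi> \<circ> \<tau> \<circ> inv \<phi>) ^^ k) x = y"
    by (simp add: conj_funpow[OF assms(1)] permutes_inverses[OF assms(1)])
  then show "\<exists>n. ((\<phi> \<circ> \<tau> \<circ> inv \<phi>) ^^ n) x = y" by blast
qed

definition cyc :: "nat \<Rightarrow> nat \<Rightarrow> nat" where
  "cyc n i = (if i < n then Suc i mod n else i)"

lemma Suc_mod_lt: "i < n \<Longrightarrow> Suc i mod n = (if Suc i = n then 0 else Suc i)"
  by auto

lemma cyc_pow: "i < n \<Longrightarrow> (cyc n ^^ k) i = (i + k) mod n"
proof (induction k)
  case 0 then show ?case by simp
next
  case (Suc k)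
  have "(i + k) mod n < n" using Suc.prems by simp
  then show ?case using Suc by (simp add: cyc_def mod_Suc_eq)
qed

lemma cyc_permutes: "cyc n permutes {0..<n}"
proof (rule bij_imp_permutes)
  have inj: "inj_on (cyc n) {0..<n}"
    by (rule inj_onI) (auto simp: cyc_def Suc_mod_lt split: if_splits)
  have "cyc n ` {0..<n} \<subseteq> {0..<n}" by (auto simp: cyc_def)
  then have "cyc n ` {0..<n} = {0..<n}" using endo_inj_surj[OF _ _ inj] by simp
  then show "bij_betw (cyc n) {0..<n} {0..<n}" using inj by (simp add: bij_betw_def)
  show "\<And>x. x \<notin> {0..<n} \<Longrightarrow> cyc n x = x" by (simp add: cyc_def)
qed

lemma cyc_single: "single_cycle_on {0..<n} (cyc n)"
  unfolding single_cycle_on_def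
proof (intro ballI)
  fix x y assume xy: "x \<in> {0..<n}" "y \<in> {0..<n}"
  have "(cyc n ^^ (y + n - x)) x = (x + (y + n - x)) mod n" using xy by (simp add: cyc_pow)
  also have "\<dots> = y" using xy by simp
  finally show "\<exists>k. (cyc n ^^ k) x = y" by blast
qed

definition cycs :: "nat \<Rightarrow> ((nat \<Rightarrow> nat) \<times> nat) set" where
  "cycs n = {(\<tau>, r). \<tau> permutes {0..<n} \<and> single_cycle_on {0..<n} \<tau> \<and> r \<in> {0..<n}}"

lemma conj_cyc_pow:
  assumes "\<pi> permutes {0..<n}" "i < n"
  shows "((\<pi> \<circ> cyc n \<circ> inv \<pi>) ^^ i) (\<pi> 0) = \<pi> i"
  using assms by (simp add: conj_funpow[OF assms(1)] permutes_inverses[OF assms(1)] cyc_pow)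

lemma cycle_surj:
  assumes \<tau>: "\<tau> permutes {0..<n}" "single_cycle_on {0..<n} \<tau>" and r: "r < n"
  shows "\<exists>\<pi>. \<pi> permutes {0..<n} \<and> \<pi> 0 = r \<and> \<pi> \<circ> cyc n \<circ> inv \<pi> = \<tau>"
proof -
  let ?B = "{0..<n::nat}"
  have inB: "(\<tau> ^^ k) r \<in> ?B" for k
  proof (induction k)
    case 0 then show ?case using r by simp
  next
    case (Suc k) then show ?case using permutes_in_image[OF \<tau>(1)] by simp
  qed
  have injt: "inj (\<tau> ^^ k)" for k using permutes_inj[OF \<tau>(1)] by simp
  have reach: "\<exists>k. (\<tau> ^^ k) r = y" if "y \<in> ?B" for y
    using \<tau>(2) r that unfolding single_cycle_on_def by auto
  have inj: "inj_on (\<lambda>i. (\<tau> ^^ i) r) ?B"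
  proof (rule ccontr)
    assume "\<not> inj_on (\<lambda>i. (\<tau> ^^ i) r) ?B"
    then obtain i0 j0 where ij0: "i0 < n" "j0 < n" "i0 \<noteq> j0" "(\<tau> ^^ i0) r = (\<tau> ^^ j0) r"
      unfolding inj_on_def by auto
    have "\<exists>i j. i < j \<and> j < n \<and> (\<tau> ^^ i) r = (\<tau> ^^ j) r"
    proof (cases "i0 < j0")
      case True with ij0 show ?thesis by auto
    next
      case False with ij0 have "j0 < i0" by auto
      then show ?thesis using ij0 by (intro exI[of _ j0] exI[of _ i0]) auto
    qed
    then obtain i j where ij: "i < j" "j < n" "(\<tau> ^^ i) r = (\<tau> ^^ j) r" by blast
    define p where "p = j - i"
    have p: "0 < p" "p < n" using ij by (auto simp: p_def)
    have "(\<tau> ^^ i) ((\<tau> ^^ p) r) = (\<tau> ^^ i) r"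
      using ij by (simp add: p_def funpow_apply_add[symmetric])
    then have pr: "(\<tau> ^^ p) r = r" using injt[of i] by (simp add: inj_eq)
    have q: "(\<tau> ^^ (q * p)) r = r" for q
    proof (induction q)
      case 0 then show ?case by simp
    next
      case (Suc q)
      have "(\<tau> ^^ (Suc q * p)) r = (\<tau> ^^ (q * p)) ((\<tau> ^^ p) r)"
        by (simp add: funpow_apply_add[symmetric] add.commute)
      then show ?case using Suc pr by simp
    qed
    have modeq: "(\<tau> ^^ k) r = (\<tau> ^^ (k mod p)) r" for k
    proof -
      have "(\<tau> ^^ k) r = (\<tau> ^^ (k mod p + (k div p) * p)) r" by simp
      also have "\<dots> = (\<tau> ^^ (k mod p)) r" by (simp only: funpow_apply_add q)
      finally show ?thesis .
    qed
    have sub: "?B \<subseteq> (\<lambda>k. (\<tau> ^^ k) r) ` {0..<p}"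
    proof
      fix y assume "y \<in> ?B"
      then obtain k where "(\<tau> ^^ k) r = y" using reach by blast
      then have "y = (\<tau> ^^ (k mod p)) r" using modeq by simp
      moreover have "k mod p \<in> {0..<p}" using p by simp
      ultimately show "y \<in> (\<lambda>k. (\<tau> ^^ k) r) ` {0..<p}" by blast
    qed
    have "card ?B \<le> card ((\<lambda>k. (\<tau> ^^ k) r) ` {0..<p})"
      by (rule card_mono[OF _ sub]) simp
    also have "\<dots> \<le> card {0..<p}" by (rule card_image_le) simp
    finally have "card ?B \<le> card {0..<p}" .
    then show False using p by simp
  qed
  define \<pi> where "\<pi> i = (if i < n then (\<tau> ^^ i) r else i)" for i
  have "(\<lambda>i. (\<tau> ^^ i) r) ` ?B \<subseteq> ?B" using inB by auto
  then have img: "(\<lambda>i. (\<tau> ^^ i) r) ` ?B = ?B"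
    using endo_inj_surj[OF _ _ inj] by simp
  have bij: "bij_betw \<pi> ?B ?B"
  proof -
    have "bij_betw (\<lambda>i. (\<tau> ^^ i) r) ?B ?B" using inj img by (simp add: bij_betw_def)
    then show ?thesis by (rule bij_betw_cong[THEN iffD1, rotated]) (simp add: \<pi>_def)
  qed
  have pp: "\<pi> permutes ?B" by (rule bij_imp_permutes[OF bij]) (simp add: \<pi>_def)
  have tn: "(\<tau> ^^ n) r = r"
  proof -
    have "(\<tau> ^^ n) r \<in> (\<lambda>i. (\<tau> ^^ i) r) ` ?B" using img inB[of n] by simp
    then obtain k where k0: "k \<in> ?B" "(\<tau> ^^ n) r = (\<tau> ^^ k) r" by blast
    then have k: "k < n" "(\<tau> ^^ k) r = (\<tau> ^^ n) r" by auto
    show ?thesis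
    proof (cases "k = 0")
      case True then show ?thesis using k by simp
    next
      case False
      have "(\<tau> ^^ k) ((\<tau> ^^ (n - k)) r) = (\<tau> ^^ k) r"
        using k by (simp add: funpow_apply_add[symmetric])
      then have "(\<tau> ^^ (n - k)) r = (\<tau> ^^ 0) r" using injt[of k] by (simp add: inj_eq)
      moreover have "n - k \<in> ?B" "0 \<in> ?B" using k False by auto
      ultimately have "n - k = 0" by (rule inj_onD[OF inj])
      then show ?thesis using k by simp
    qed
  qed
  have comm: "\<pi> (cyc n i) = \<tau> (\<pi> i)" if "i < n" for i
  proof (cases "Suc i = n")
    case True
    then have "\<tau> (\<pi> i) = (\<tau> ^^ n) r" using that by (simp add: \<pi>_def True[symmetric])
    then show ?thesis using True tn r by (simp add: \<pi>_def cyc_def)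
  next
    case False
    then show ?thesis using that by (simp add: \<pi>_def cyc_def)
  qed
  have "\<pi> \<circ> cyc n \<circ> inv \<pi> = \<tau>"
  proof
    fix x
    show "(\<pi> \<circ> cyc n \<circ> inv \<pi>) x = \<tau> x"
    proof (cases "x < n")
      case True
      then have "inv \<pi> x < n" using permutes_in_image[OF permutes_inv[OF pp]] by simp
      then show ?thesis using comm permutes_inverses[OF pp] by simp
    next
      case False
      then have "inv \<pi> x = x" using permutes_not_in[OF permutes_inv[OF pp]] by simp
      then show ?thesis using False permutes_not_in[OF \<tau>(1)] by (simp add: cyc_def \<pi>_def)
    qed
  qed
  moreover have "\<pi> 0 = r" using r by (simp add: \<pi>_def)
  ultimately show ?thesis using pp by blast
qed

lemma card_cycs:
  assumes "0 < n"
  shows "card (cycs n) = fact n"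
proof -
  define P where "P \<pi> = (\<pi> \<circ> cyc n \<circ> inv \<pi>, \<pi> 0)" for \<pi> :: "nat \<Rightarrow> nat"
  have "inj_on P {\<pi>. \<pi> permutes {0..<n}}"
  proof (rule inj_onI)
    fix \<pi>1 \<pi>2 assume p: "\<pi>1 \<in> {\<pi>. \<pi> permutes {0..<n}}" "\<pi>2 \<in> {\<pi>. \<pi> permutes {0..<n}}" "P \<pi>1 = P \<pi>2"
    show "\<pi>1 = \<pi>2"
    proof
      fix i show "\<pi>1 i = \<pi>2 i"
      proof (cases "i < n")
        case True
        then show ?thesis using conj_cyc_pow[of \<pi>1 n i] conj_cyc_pow[of \<pi>2 n i] p by (simp add: P_def)
      next
        case False
        then show ?thesis using p permutes_not_in[of \<pi>1 "{0..<n}" i] permutes_not_in[of \<pi>2 "{0..<n}" i] by simp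
      qed
    qed
  qed
  moreover have "P ` {\<pi>. \<pi> permutes {0..<n}} = cycs n"
  proof
    show "P ` {\<pi>. \<pi> permutes {0..<n}} \<subseteq> cycs n"
    proof
      fix x assume "x \<in> P ` {\<pi>. \<pi> permutes {0..<n}}"
      then obtain \<pi> where pi: "\<pi> permutes {0..<n}" "x = P \<pi>" by blast
      have "\<pi> \<circ> cyc n \<circ> inv \<pi> permutes {0..<n}"
        by (intro permutes_compose permutes_inv pi cyc_permutes)
      moreover have "single_cycle_on {0..<n} (\<pi> \<circ> cyc n \<circ> inv \<pi>)"
        by (rule single_cycle_conj[OF pi(1) cyc_single])
      moreover have "\<pi> 0 \<in> {0..<n}" using permutes_in_image[OF pi(1)] assms by simp
      ultimately show "x \<in> cycs n" using pi by (simp add: P_def cycs_def)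
    qed
    show "cycs n \<subseteq> P ` {\<pi>. \<pi> permutes {0..<n}}"
    proof
      fix x assume "x \<in> cycs n"
      then obtain \<tau> r where x: "x = (\<tau>, r)" "\<tau> permutes {0..<n}" "single_cycle_on {0..<n} \<tau>" "r < n"
        by (auto simp: cycs_def)
      then obtain \<pi> where "\<pi> permutes {0..<n} \<and> \<pi> 0 = r \<and> \<pi> \<circ> cyc n \<circ> inv \<pi> = \<tau>"
        using cycle_surj by blast
      then show "x \<in> P ` {\<pi>. \<pi> permutes {0..<n}}" using x by (auto simp: P_def)
    qed
  qed
  ultimately have "card (cycs n) = card {\<pi>. \<pi> permutes {0..<n}}" using card_image by metis
  then show ?thesis using card_permutations[of "{0..<n}" n] by simp
qed


definition aF :: "('a \<Rightarrow> 'a) \<Rightarrow> 'a set set \<Rightarrow> 'a \<Rightarrow> 'a" where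
  "aF \<alpha> F b = (if {b, \<alpha> b} \<in> F then \<alpha> b else b)"

lemma tour_eq: "tour \<sigma> \<alpha> F = \<sigma> \<circ> aF \<alpha> F"
  by (simp add: fun_eq_iff tour_def aF_def)

lemma aF_props:
  assumes "\<alpha> \<in> invols B" "F \<subseteq> map_edges B \<alpha>"
  shows "aF \<alpha> F (aF \<alpha> F b) = b" "b \<notin> B \<Longrightarrow> aF \<alpha> F b = b" "aF \<alpha> F b = b \<or> aF \<alpha> F b = \<alpha> b"
proof -
  have p: "\<alpha> permutes B" and inv: "\<forall>x\<in>B. \<alpha> (\<alpha> x) = x \<and> \<alpha> x \<noteq> x"
    using assms(1) by (auto simp: invols_def)
  show out: "aF \<alpha> F b = b" if "b \<notin> B" for b
  proof -
    have "\<alpha> b = b" using p that by (simp add: permutes_not_in)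
    moreover have "{b} \<notin> F"
    proof
      assume "{b} \<in> F"
      then obtain c where "c \<in> B" "{b} = {c, \<alpha> c}" using assms(2) by (auto simp: map_edges_def)
      then show False using that by auto
    qed
    ultimately show ?thesis by (simp add: aF_def)
  qed
  show "aF \<alpha> F b = b \<or> aF \<alpha> F b = \<alpha> b" by (simp add: aF_def)
  show "aF \<alpha> F (aF \<alpha> F b) = b"
  proof (cases "b \<in> B")
    case False then show ?thesis using out by simp
  next
    case True
    then have aa: "\<alpha> (\<alpha> b) = b" using inv by blast
    have "{\<alpha> b, \<alpha> (\<alpha> b)} = {b, \<alpha> b}" using aa by auto
    then show ?thesis using aa by (simp add: aF_def)
  qed
qed

lemma aF_permutes:
  assumes "\<alpha> \<in> invols B" "F \<subseteq> map_edges B \<alpha>"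
  shows "aF \<alpha> F permutes B"
  unfolding permutes_def
proof (intro conjI allI impI)
  fix x assume "x \<notin> B" then show "aF \<alpha> F x = x" using aF_props[OF assms] by blast
next
  fix y show "\<exists>!x. aF \<alpha> F x = y"
    using aF_props(1)[OF assms] by metis
qed

definition Rel :: "'a set \<Rightarrow> ('a \<Rightarrow> 'a) \<Rightarrow> ('a \<Rightarrow> 'a) \<Rightarrow> ('a \<times> 'a) set" where
  "Rel B \<sigma> \<alpha> = {(b, \<sigma> b) | b. b \<in> B} \<union> {(b, inv \<sigma> b) | b. b \<in> B} \<union> {(b, \<alpha> b) | b. b \<in> B}"

lemma is_map_alt: "is_map B \<sigma> \<alpha> \<longleftrightarrow> finite B \<and> \<sigma> permutes B \<and> \<alpha> \<in> invols B \<and>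
     (\<forall>x\<in>B. \<forall>y\<in>B. (x, y) \<in> (Rel B \<sigma> \<alpha>)\<^sup>*)"
  by (auto simp: is_map_def invols_def Rel_def)

lemma from_tour:
  assumes fin: "finite B" and \<tau>: "\<tau> permutes B" "single_cycle_on B \<tau>"
    and \<alpha>: "\<alpha> \<in> invols B" and F: "F \<subseteq> map_edges B \<alpha>"
  shows "is_map B (\<tau> \<circ> aF \<alpha> F) \<alpha>" "tour (\<tau> \<circ> aF \<alpha> F) \<alpha> F = \<tau>"
proof -
  let ?a = "aF \<alpha> F"
  let ?s = "\<tau> \<circ> ?a"
  have ap: "?a permutes B" by (rule aF_permutes[OF \<alpha> F])
  have sp: "?s permutes B" by (rule permutes_compose[OF ap \<tau>(1)])
  show tt: "tour ?s \<alpha> F = \<tau>"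
    by (simp add: tour_eq fun_eq_iff aF_props(1)[OF \<alpha> F])
  have step: "(x, (\<tau> ^^ k) x) \<in> (Rel B ?s \<alpha>)\<^sup>*" if x: "x \<in> B" for x k
  proof (induction k)
    case 0 then show ?case by simp
  next
    case (Suc k)
    let ?z = "(\<tau> ^^ k) x"
    have zB: "?z \<in> B"
    proof -
      have "\<And>j. (\<tau> ^^ j) x \<in> B"
      proof -
        fix j show "(\<tau> ^^ j) x \<in> B"
          by (induction j) (use x permutes_in_image[OF \<tau>(1)] in auto)
      qed
      then show ?thesis .
    qed
    have "(?z, ?a ?z) \<in> (Rel B ?s \<alpha>)\<^sup>*"
    proof (cases "?a ?z = ?z")
      case True then show ?thesis by simp
    next
      case False
      then have "?a ?z = \<alpha> ?z" using aF_props(3)[OF \<alpha> F] by blast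
      then have "(?z, ?a ?z) \<in> Rel B ?s \<alpha>" using zB by (auto simp: Rel_def)
      then show ?thesis by blast
    qed
    moreover have "?a ?z \<in> B" using zB permutes_in_image[OF ap] by simp
    then have "(?a ?z, ?s (?a ?z)) \<in> Rel B ?s \<alpha>" by (auto simp: Rel_def)
    moreover have "?s (?a ?z) = (\<tau> ^^ Suc k) x" by (simp add: aF_props(1)[OF \<alpha> F])
    ultimately have "(?z, (\<tau> ^^ Suc k) x) \<in> (Rel B ?s \<alpha>)\<^sup>*" by (metis rtrancl_into_rtrancl)
    with Suc.IH show ?case by (rule rtrancl_trans)
  qed
  have "\<forall>x\<in>B. \<forall>y\<in>B. (x, y) \<in> (Rel B ?s \<alpha>)\<^sup>*"
  proof (intro ballI)
    fix x y assume "x \<in> B" "y \<in> B"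
    then obtain k where "(\<tau> ^^ k) x = y" using \<tau>(2) unfolding single_cycle_on_def by blast
    then show "(x, y) \<in> (Rel B ?s \<alpha>)\<^sup>*" using step[OF \<open>x \<in> B\<close>, of k] by simp
  qed
  then show "is_map B ?s \<alpha>" using fin sp \<alpha> by (simp add: is_map_alt)
qed

definition QT :: "nat \<Rightarrow> (((nat \<Rightarrow> nat) \<times> (nat \<Rightarrow> nat) \<times> nat) \<times> nat set set) set" where
  "QT m = Sigma (rooted_maps_std m) (\<lambda>(\<sigma>, \<alpha>, r). quasi_trees {0..<2*m} \<sigma> \<alpha>)"

definition YY :: "nat \<Rightarrow> ((nat \<Rightarrow> nat) \<times> nat set set) set" where
  "YY m = Sigma (invols {0..<2*m}) (\<lambda>\<alpha>. Pow (map_edges {0..<2*m} \<alpha>))"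

lemma card_QT:
  assumes m: "0 < m"
  shows "card (QT m) = card (cycs (2*m) \<times> YY m)"
proof -
  let ?B = "{0..<2*m}"
  define f where "f = (\<lambda>((\<sigma>::nat\<Rightarrow>nat, \<alpha>::nat\<Rightarrow>nat, r::nat), F::nat set set). ((tour \<sigma> \<alpha> F, r), (\<alpha>, F)))"
  have memS: "\<sigma> permutes ?B \<and> \<alpha> \<in> invols ?B \<and> r \<in> ?B \<and> is_map ?B \<sigma> \<alpha>"
    if "(\<sigma>, \<alpha>, r) \<in> rooted_maps_std m" for \<sigma> \<alpha> r
    using that m by (auto simp: rooted_maps_std_def is_rooted_map_def is_map_alt)
  have "inj_on f (QT m)"
  proof (rule inj_onI)
    fix x y assume x: "x \<in> QT m" and y: "y \<in> QT m" and e: "f x = f y"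
    obtain \<sigma> \<alpha> r F where xd: "x = ((\<sigma>, \<alpha>, r), F)" by (metis prod.exhaust)
    obtain \<sigma>' \<alpha>' r' F' where yd: "y = ((\<sigma>', \<alpha>', r'), F')" by (metis prod.exhaust)
    have eq: "tour \<sigma> \<alpha> F = tour \<sigma>' \<alpha> F" "r = r'" "\<alpha> = \<alpha>'" "F = F'"
      using e by (auto simp: f_def xd yd)
    have \<alpha>: "\<alpha> \<in> invols ?B" "F \<subseteq> map_edges ?B \<alpha>"
      using x memS by (auto simp: xd QT_def quasi_trees_def)
    have "\<sigma> = \<sigma>'"
    proof
      fix b
      have "tour \<sigma> \<alpha> F (aF \<alpha> F b) = tour \<sigma>' \<alpha> F (aF \<alpha> F b)" using eq by simp
      then show "\<sigma> b = \<sigma>' b" by (simp add: tour_eq aF_props(1)[OF \<alpha>])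
    qed
    then show "x = y" using eq xd yd by simp
  qed
  moreover have "f ` QT m = cycs (2*m) \<times> YY m"
  proof
    show "f ` QT m \<subseteq> cycs (2*m) \<times> YY m"
    proof
      fix z assume "z \<in> f ` QT m"
      then obtain \<sigma> \<alpha> r F where z: "z = f ((\<sigma>, \<alpha>, r), F)" "((\<sigma>, \<alpha>, r), F) \<in> QT m"
        by (metis imageE prod.exhaust)
      then have S: "(\<sigma>, \<alpha>, r) \<in> rooted_maps_std m" and q: "F \<in> quasi_trees ?B \<sigma> \<alpha>"
        by (auto simp: QT_def)
      have ms: "\<sigma> permutes ?B" "\<alpha> \<in> invols ?B" "r \<in> ?B" using memS[OF S] by auto
      have F: "F \<subseteq> map_edges ?B \<alpha>" "single_cycle_on ?B (tour \<sigma> \<alpha> F)"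
        using q by (auto simp: quasi_trees_def)
      have "tour \<sigma> \<alpha> F permutes ?B"
        unfolding tour_eq by (rule permutes_compose[OF aF_permutes[OF ms(2) F(1)] ms(1)])
      then show "z \<in> cycs (2*m) \<times> YY m"
        using ms F z by (simp add: f_def cycs_def YY_def)
    qed
    show "cycs (2*m) \<times> YY m \<subseteq> f ` QT m"
    proof
      fix z assume "z \<in> cycs (2*m) \<times> YY m"
      then obtain \<tau> r \<alpha> F where z: "z = ((\<tau>, r), (\<alpha>, F))" "\<tau> permutes ?B" "single_cycle_on ?B \<tau>"
        "r \<in> ?B" "\<alpha> \<in> invols ?B" "F \<subseteq> map_edges ?B \<alpha>"
        by (auto simp: cycs_def YY_def)
      note ft = from_tour[OF _ z(2,3,5,6)]
      have "((\<tau> \<circ> aF \<alpha> F, \<alpha>, r), F) \<in> QT m"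
        using ft z by (simp add: QT_def rooted_maps_std_def is_rooted_map_def quasi_trees_def)
      moreover have "f ((\<tau> \<circ> aF \<alpha> F, \<alpha>, r), F) = z" using ft z by (simp add: f_def)
      ultimately show "z \<in> f ` QT m" by (metis imageI)
    qed
  qed
  ultimately show ?thesis by (metis card_image)
qed

lemma card_YY: "card (YY m) = dfact m * 2 ^ m"
proof -
  let ?B = "{0..<2*m}"
  have "card (YY m) = (\<Sum>\<alpha>\<in>invols ?B. card (Pow (map_edges ?B \<alpha>)))"
    unfolding YY_def
    by (rule card_SigmaI) (auto simp: invols_finite map_edges_def)
  also have "\<dots> = (\<Sum>\<alpha>\<in>invols ?B. 2 ^ m)"
  proof (rule sum.cong[OF refl])
    fix \<alpha> assume "\<alpha> \<in> invols ?B"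
    then have "card (map_edges ?B \<alpha>) = m" using card_edges[of ?B \<alpha>] by simp
    moreover have "finite (map_edges ?B \<alpha>)" by (simp add: map_edges_def)
    ultimately show "card (Pow (map_edges ?B \<alpha>)) = 2 ^ m" by (simp add: card_Pow)
  qed
  also have "\<dots> = dfact m * 2 ^ m" using card_invols[of ?B m] by simp
  finally show ?thesis .
qed


lemma commute_conj:
  assumes \<phi>: "\<phi> permutes B" and s: "\<sigma> permutes B" and s': "\<sigma>' permutes B"
    and c: "\<forall>b\<in>B. \<phi> (\<sigma> b) = \<sigma>' (\<phi> b)"
  shows "\<sigma>' = \<phi> \<circ> \<sigma> \<circ> inv \<phi>"
proof
  fix x show "\<sigma>' x = (\<phi> \<circ> \<sigma> \<circ> inv \<phi>) x"
  proof (cases "x \<in> B")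
    case True
    then have "inv \<phi> x \<in> B" using permutes_in_image[OF permutes_inv[OF \<phi>]] by simp
    then show ?thesis using c permutes_inverses[OF \<phi>] by (metis comp_apply)
  next
    case False
    then have "inv \<phi> x = x" using permutes_not_in[OF permutes_inv[OF \<phi>]] by simp
    then show ?thesis using False permutes_not_in[OF s] permutes_not_in[OF s'] permutes_not_in[OF \<phi>]
      by simp
  qed
qed

lemma conj_commute:
  assumes "\<phi> permutes B"
  shows "\<phi> (\<sigma> b) = (\<phi> \<circ> \<sigma> \<circ> inv \<phi>) (\<phi> b)"
  by (simp add: permutes_inverses[OF assms])

lemma agree:
  assumes m: "is_map B \<sigma> \<alpha>" and r: "r \<in> B"
    and c1: "\<forall>b\<in>B. \<phi>1 (\<sigma> b) = \<sigma>' (\<phi>1 b) \<and> \<phi>1 (\<alpha> b) = \<alpha>' (\<phi>1 b)"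
    and c2: "\<forall>b\<in>B. \<phi>2 (\<sigma> b) = \<sigma>' (\<phi>2 b) \<and> \<phi>2 (\<alpha> b) = \<alpha>' (\<phi>2 b)"
    and inj: "inj \<sigma>'" and e: "\<phi>1 r = \<phi>2 r"
  shows "\<forall>y\<in>B. \<phi>1 y = \<phi>2 y"
proof
  fix y assume y: "y \<in> B"
  have sp: "\<sigma> permutes B" and conn: "(r, y) \<in> (Rel B \<sigma> \<alpha>)\<^sup>*"
    using m r y by (auto simp: is_map_alt)
  from conn show "\<phi>1 y = \<phi>2 y"
  proof (induction rule: rtrancl_induct)
    case base then show ?case by (rule e)
  next
    case (step a b)
    from step(2) obtain a' where a': "a' = a" "a \<in> B" and
      cases: "b = \<sigma> a \<or> b = inv \<sigma> a \<or> b = \<alpha> a"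
      unfolding Rel_def by blast
    show ?case
    proof -
      { assume "b = \<sigma> a" then have ?thesis using c1 c2 a' step(3) by simp }
      moreover
      { assume "b = \<alpha> a" then have ?thesis using c1 c2 a' step(3) by simp }
      moreover
      { assume bi: "b = inv \<sigma> a"
        then have bB: "b \<in> B" using a' permutes_in_image[OF permutes_inv[OF sp]] by simp
        have sb: "\<sigma> b = a" using bi permutes_inverses[OF sp] by simp
        have "\<sigma>' (\<phi>1 b) = \<sigma>' (\<phi>2 b)" using c1 c2 bB sb step(3) by metis
        then have ?thesis using inj by (simp add: inj_eq) }
      ultimately show ?thesis using cases by blast
    qed
  qed
qed

lemma conj_is_map:
  assumes m: "is_map B \<sigma> \<alpha>" and \<phi>: "\<phi> permutes B"
  shows "is_map B (\<phi> \<circ> \<sigma> \<circ> inv \<phi>) (\<phi> \<circ> \<alpha> \<circ> inv \<phi>)"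
proof -
  let ?s = "\<phi> \<circ> \<sigma> \<circ> inv \<phi>" and ?a = "\<phi> \<circ> \<alpha> \<circ> inv \<phi>"
  have fin: "finite B" and sp: "\<sigma> permutes B" and ai: "\<alpha> \<in> invols B"
    and conn: "\<forall>x\<in>B. \<forall>y\<in>B. (x, y) \<in> (Rel B \<sigma> \<alpha>)\<^sup>*"
    using m by (auto simp: is_map_alt)
  have ap: "\<alpha> permutes B" and inv: "\<forall>b\<in>B. \<alpha> (\<alpha> b) = b \<and> \<alpha> b \<noteq> b" using ai by (auto simp: invols_def)
  have sp': "?s permutes B" by (intro permutes_compose permutes_inv \<phi> sp)
  have ap': "?a permutes B" by (intro permutes_compose permutes_inv \<phi> ap)
  have "\<forall>b\<in>B. ?a (?a b) = b \<and> ?a b \<noteq> b"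
  proof
    fix b assume b: "b \<in> B"
    then have ib: "inv \<phi> b \<in> B" using permutes_in_image[OF permutes_inv[OF \<phi>]] by simp
    have "?a (?a b) = b" using inv ib by (simp add: permutes_inverses[OF \<phi>])
    moreover have "?a b \<noteq> b"
    proof
      assume "?a b = b"
      then have "\<phi> (\<alpha> (inv \<phi> b)) = \<phi> (inv \<phi> b)" by (simp add: permutes_inverses[OF \<phi>])
      then have "\<alpha> (inv \<phi> b) = inv \<phi> b" using permutes_inj[OF \<phi>] by (simp add: inj_eq)
      then show False using inv ib by blast
    qed
    ultimately show "?a (?a b) = b \<and> ?a b \<noteq> b" by blast
  qed
  then have ai': "?a \<in> invols B" using ap' by (simp add: invols_def)
  have relmap: "(\<phi> x, \<phi> y) \<in> Rel B ?s ?a" if "(x, y) \<in> Rel B \<sigma> \<alpha>" for x y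
  proof -
    from that have x: "x \<in> B" and cases: "y = \<sigma> x \<or> y = inv \<sigma> x \<or> y = \<alpha> x"
      unfolding Rel_def by blast+
    have px: "\<phi> x \<in> B" using x permutes_in_image[OF \<phi>] by simp
    { assume "y = \<sigma> x" then have "\<phi> y = ?s (\<phi> x)" by (simp add: permutes_inverses[OF \<phi>])
      then have ?thesis using px unfolding Rel_def by blast }
    moreover
    { assume "y = \<alpha> x" then have "\<phi> y = ?a (\<phi> x)" by (simp add: permutes_inverses[OF \<phi>])
      then have ?thesis using px unfolding Rel_def by blast }
    moreover
    { assume "y = inv \<sigma> x"
      then have "\<sigma> y = x" using permutes_inverses[OF sp] by simp
      then have "?s (\<phi> y) = \<phi> x" by (simp add: permutes_inverses[OF \<phi>])
      then have "\<phi> y = inv ?s (\<phi> x)" using permutes_inv_eq[OF sp'] by metis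
      then have ?thesis using px unfolding Rel_def by blast }
    ultimately show ?thesis using cases by blast
  qed
  have rtmap: "(\<phi> x, \<phi> y) \<in> (Rel B ?s ?a)\<^sup>*" if "(x, y) \<in> (Rel B \<sigma> \<alpha>)\<^sup>*" for x y
    using that
  proof (induction rule: rtrancl_induct)
    case base then show ?case by simp
  next
    case (step y z) then show ?case using relmap by (meson rtrancl_into_rtrancl)
  qed
  have "\<forall>x\<in>B. \<forall>y\<in>B. (x, y) \<in> (Rel B ?s ?a)\<^sup>*"
  proof (intro ballI)
    fix x y assume "x \<in> B" "y \<in> B"
    then have "inv \<phi> x \<in> B" "inv \<phi> y \<in> B" using permutes_in_image[OF permutes_inv[OF \<phi>]] by auto
    then have "(\<phi> (inv \<phi> x), \<phi> (inv \<phi> y)) \<in> (Rel B ?s ?a)\<^sup>*" using conn rtmap by blast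
    then show "(x, y) \<in> (Rel B ?s ?a)\<^sup>*" by (simp add: permutes_inverses[OF \<phi>])
  qed
  then show ?thesis using fin sp' ai' by (simp add: is_map_alt)
qed

lemma conj_inv_id:
  assumes "\<phi> permutes B"
  shows "inv \<phi> \<circ> (\<phi> \<circ> \<sigma> \<circ> inv \<phi>) \<circ> inv (inv \<phi>) = \<sigma>"
  using assms by (simp add: fun_eq_iff permutes_inv_inv permutes_inverses)

lemma conj_comp:
  assumes "\<phi> permutes B" "\<psi> permutes B"
  shows "\<psi> \<circ> (\<phi> \<circ> \<sigma> \<circ> inv \<phi>) \<circ> inv \<psi> = (\<psi> \<circ> \<phi>) \<circ> \<sigma> \<circ> inv (\<psi> \<circ> \<phi>)"
  using assms by (simp add: o_inv_distrib permutes_bij o_assoc)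

lemma qt_image:
  assumes \<phi>: "\<phi> permutes B" and ai: "\<alpha> \<in> invols B" and F: "F \<in> quasi_trees B \<sigma> \<alpha>"
  shows "(image \<phi>) ` F \<in> quasi_trees B (\<phi> \<circ> \<sigma> \<circ> inv \<phi>) (\<phi> \<circ> \<alpha> \<circ> inv \<phi>)"
proof -
  let ?s = "\<phi> \<circ> \<sigma> \<circ> inv \<phi>" and ?a = "\<phi> \<circ> \<alpha> \<circ> inv \<phi>"
  have FE: "F \<subseteq> map_edges B \<alpha>" and sc: "single_cycle_on B (tour \<sigma> \<alpha> F)"
    using F by (auto simp: quasi_trees_def)
  have injp: "inj \<phi>" using permutes_inj[OF \<phi>] .
  have inji: "inj (image \<phi>)" by (rule injI) (simp add: inj_image_eq_iff[OF injp])
  have "(image \<phi>) ` F \<subseteq> map_edges B ?a"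
  proof
    fix e assume "e \<in> (image \<phi>) ` F"
    then obtain b where b: "b \<in> B" "e = \<phi> ` {b, \<alpha> b}" using FE by (auto simp: map_edges_def)
    then have "e = {\<phi> b, ?a (\<phi> b)}" by (simp add: permutes_inverses[OF \<phi>])
    moreover have "\<phi> b \<in> B" using b permutes_in_image[OF \<phi>] by simp
    ultimately show "e \<in> map_edges B ?a" by (auto simp: map_edges_def)
  qed
  moreover have "tour ?s ?a ((image \<phi>) ` F) = \<phi> \<circ> tour \<sigma> \<alpha> F \<circ> inv \<phi>"
  proof
    fix x
    define y where "y = inv \<phi> x"
    have x: "x = \<phi> y" by (simp add: y_def permutes_inverses[OF \<phi>])
    have "{x, ?a x} = \<phi> ` {y, \<alpha> y}" by (simp add: x permutes_inverses[OF \<phi>])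
    then have "({x, ?a x} \<in> (image \<phi>) ` F) = (image \<phi> {y, \<alpha> y} \<in> (image \<phi>) ` F)" by simp
    also have "\<dots> = ({y, \<alpha> y} \<in> F)" by (rule inj_image_mem_iff[OF inji])
    finally have "({x, ?a x} \<in> (image \<phi>) ` F) = ({y, \<alpha> y} \<in> F)" .
    then show "tour ?s ?a ((image \<phi>) ` F) x = (\<phi> \<circ> tour \<sigma> \<alpha> F \<circ> inv \<phi>) x"
      by (simp add: tour_def y_def[symmetric] x permutes_inverses[OF \<phi>])
  qed
  then have "single_cycle_on B (tour ?s ?a ((image \<phi>) ` F))"
    using single_cycle_conj[OF \<phi> sc] by simp
  ultimately show ?thesis by (simp add: quasi_trees_def)
qed

lemma qt_finite: "finite B \<Longrightarrow> finite (quasi_trees B \<sigma> \<alpha>)"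
  by (rule finite_subset[of _ "Pow (map_edges B \<alpha>)"]) (auto simp: quasi_trees_def map_edges_def)

lemma qt_card_le:
  assumes \<phi>: "\<phi> permutes B" and m: "is_map B \<sigma> \<alpha>"
  shows "card (quasi_trees B \<sigma> \<alpha>) \<le> card (quasi_trees B (\<phi> \<circ> \<sigma> \<circ> inv \<phi>) (\<phi> \<circ> \<alpha> \<circ> inv \<phi>))"
proof -
  have fin: "finite B" and ai: "\<alpha> \<in> invols B" using m by (auto simp: is_map_alt)
  have inji: "inj (image \<phi>)" by (rule injI) (simp add: inj_image_eq_iff[OF permutes_inj[OF \<phi>]])
  have inji2: "inj (image (image \<phi>))" by (rule injI) (simp add: inj_image_eq_iff[OF inji])
  have "card (quasi_trees B \<sigma> \<alpha>) = card ((image (image \<phi>)) ` (quasi_trees B \<sigma> \<alpha>))"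
    by (rule card_image[symmetric]) (rule inj_on_subset[OF inji2], simp)
  also have "\<dots> \<le> card (quasi_trees B (\<phi> \<circ> \<sigma> \<circ> inv \<phi>) (\<phi> \<circ> \<alpha> \<circ> inv \<phi>))"
    by (rule card_mono[OF qt_finite[OF fin]]) (auto intro: qt_image[OF \<phi> ai])
  finally show ?thesis .
qed

lemma qt_card_conj:
  assumes \<phi>: "\<phi> permutes B" and m: "is_map B \<sigma> \<alpha>"
  shows "card (quasi_trees B (\<phi> \<circ> \<sigma> \<circ> inv \<phi>) (\<phi> \<circ> \<alpha> \<circ> inv \<phi>)) = card (quasi_trees B \<sigma> \<alpha>)"
proof -
  have m': "is_map B (\<phi> \<circ> \<sigma> \<circ> inv \<phi>) (\<phi> \<circ> \<alpha> \<circ> inv \<phi>)" by (rule conj_is_map[OF m \<phi>])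
  have "card (quasi_trees B (\<phi> \<circ> \<sigma> \<circ> inv \<phi>) (\<phi> \<circ> \<alpha> \<circ> inv \<phi>)) \<le>
        card (quasi_trees B (inv \<phi> \<circ> (\<phi> \<circ> \<sigma> \<circ> inv \<phi>) \<circ> inv (inv \<phi>)) (inv \<phi> \<circ> (\<phi> \<circ> \<alpha> \<circ> inv \<phi>) \<circ> inv (inv \<phi>)))"
    by (rule qt_card_le[OF permutes_inv[OF \<phi>] m'])
  also have "\<dots> = card (quasi_trees B \<sigma> \<alpha>)" by (simp only: conj_inv_id[OF \<phi>])
  finally show ?thesis using qt_card_le[OF \<phi> m] by simp
qed


definition cM :: "(nat \<Rightarrow> nat) \<Rightarrow> (nat \<Rightarrow> nat) \<times> (nat \<Rightarrow> nat) \<times> nat \<Rightarrow> (nat \<Rightarrow> nat) \<times> (nat \<Rightarrow> nat) \<times> nat" where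
  "cM \<phi> M = (case M of (\<sigma>, \<alpha>, r) \<Rightarrow> (\<phi> \<circ> \<sigma> \<circ> inv \<phi>, \<phi> \<circ> \<alpha> \<circ> inv \<phi>, \<phi> r))"

lemma memS:
  assumes "0 < m"
  shows "(\<sigma>, \<alpha>, r) \<in> rooted_maps_std m \<longleftrightarrow> is_map {0..<2*m} \<sigma> \<alpha> \<and> r \<in> {0..<2*m}"
  using assms by (auto simp: rooted_maps_std_def is_rooted_map_def)

lemma S_conj:
  assumes m: "0 < m" and M: "M \<in> rooted_maps_std m" and \<phi>: "\<phi> permutes {0..<2*m}"
  shows "cM \<phi> M \<in> rooted_maps_std m"
proof -
  obtain \<sigma> \<alpha> r where Md: "M = (\<sigma>, \<alpha>, r)" by (metis prod.exhaust)
  then have "is_map {0..<2*m} \<sigma> \<alpha>" "r \<in> {0..<2*m}" using M memS[OF m] by auto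
  then show ?thesis using conj_is_map[OF _ \<phi>] permutes_in_image[OF \<phi>] memS[OF m]
    by (simp add: Md cM_def)
qed

lemma iso_iff:
  assumes m: "0 < m" and M: "(\<sigma>, \<alpha>, r) \<in> rooted_maps_std m" and M': "(\<sigma>', \<alpha>', r') \<in> rooted_maps_std m"
  shows "rooted_map_iso {0..<2*m} \<sigma> \<alpha> r {0..<2*m} \<sigma>' \<alpha>' r' \<longleftrightarrow>
         (\<exists>\<phi>. \<phi> permutes {0..<2*m} \<and> (\<sigma>', \<alpha>', r') = cM \<phi> (\<sigma>, \<alpha>, r))"
proof -
  let ?B = "{0..<2*m}"
  have ne: "?B \<noteq> {}" using m by simp
  have mm: "\<sigma> permutes ?B" "\<alpha> permutes ?B" "\<sigma>' permutes ?B" "\<alpha>' permutes ?B"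
    using M M' memS[OF m] by (auto simp: is_map_def)
  show ?thesis
  proof
    assume "rooted_map_iso ?B \<sigma> \<alpha> r ?B \<sigma>' \<alpha>' r'"
    then obtain \<psi> where \<psi>: "bij_betw \<psi> ?B ?B" "\<forall>b\<in>?B. \<psi> (\<sigma> b) = \<sigma>' (\<psi> b) \<and> \<psi> (\<alpha> b) = \<alpha>' (\<psi> b)"
      "?B \<noteq> {} \<longrightarrow> \<psi> r = r'" unfolding rooted_map_iso_def by blast
    have \<psi>r: "\<psi> r = r'" using \<psi>(3) ne by blast
    define \<phi> where "\<phi> x = (if x \<in> ?B then \<psi> x else x)" for x
    have "bij_betw \<phi> ?B ?B" using \<psi>(1) by (rule bij_betw_cong[THEN iffD1, rotated]) (simp add: \<phi>_def)
    then have \<phi>: "\<phi> permutes ?B" by (rule bij_imp_permutes) (simp add: \<phi>_def)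
    have c: "\<forall>b\<in>?B. \<phi> (\<sigma> b) = \<sigma>' (\<phi> b)" "\<forall>b\<in>?B. \<phi> (\<alpha> b) = \<alpha>' (\<phi> b)"
      using \<psi>(2) permutes_in_image[OF mm(1)] permutes_in_image[OF mm(2)] by (auto simp: \<phi>_def)
    have "\<sigma>' = \<phi> \<circ> \<sigma> \<circ> inv \<phi>" by (rule commute_conj[OF \<phi> mm(1) mm(3) c(1)])
    moreover have "\<alpha>' = \<phi> \<circ> \<alpha> \<circ> inv \<phi>" by (rule commute_conj[OF \<phi> mm(2) mm(4) c(2)])
    moreover have "r' = \<phi> r" using \<psi>r M memS[OF m] by (simp add: \<phi>_def)
    ultimately show "\<exists>\<phi>. \<phi> permutes ?B \<and> (\<sigma>', \<alpha>', r') = cM \<phi> (\<sigma>, \<alpha>, r)"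
      using \<phi> by (auto simp: cM_def)
  next
    assume "\<exists>\<phi>. \<phi> permutes ?B \<and> (\<sigma>', \<alpha>', r') = cM \<phi> (\<sigma>, \<alpha>, r)"
    then obtain \<phi> where \<phi>: "\<phi> permutes ?B" "\<sigma>' = \<phi> \<circ> \<sigma> \<circ> inv \<phi>" "\<alpha>' = \<phi> \<circ> \<alpha> \<circ> inv \<phi>" "r' = \<phi> r"
      by (auto simp: cM_def)
    then show "rooted_map_iso ?B \<sigma> \<alpha> r ?B \<sigma>' \<alpha>' r'"
      unfolding rooted_map_iso_def
      by (intro exI[of _ \<phi>]) (simp add: permutes_imp_bij permutes_inverses[OF \<phi>(1)])
  qed
qed

lemma R_iff:
  assumes m: "0 < m"
  shows "(M, M') \<in> rooted_map_iso_rel m \<longleftrightarrow>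
    M \<in> rooted_maps_std m \<and> M' \<in> rooted_maps_std m \<and> (\<exists>\<phi>. \<phi> permutes {0..<2*m} \<and> M' = cM \<phi> M)"
proof -
  obtain \<sigma> \<alpha> r where Md: "M = (\<sigma>, \<alpha>, r)" by (metis prod.exhaust)
  obtain \<sigma>' \<alpha>' r' where Md': "M' = (\<sigma>', \<alpha>', r')" by (metis prod.exhaust)
  have "(M, M') \<in> rooted_map_iso_rel m \<longleftrightarrow> M \<in> rooted_maps_std m \<and> M' \<in> rooted_maps_std m \<and>
     rooted_map_iso {0..<2*m} \<sigma> \<alpha> r {0..<2*m} \<sigma>' \<alpha>' r'"
    by (simp add: rooted_map_iso_rel_def Md Md')
  then show ?thesis using iso_iff[OF m, of \<sigma> \<alpha> r \<sigma>' \<alpha>' r'] unfolding Md Md' by blast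
qed

lemma cM_id: "cM id M = M"
  by (cases M) (simp add: cM_def)

lemma cM_inv:
  assumes "\<phi> permutes B"
  shows "cM (inv \<phi>) (cM \<phi> M) = M"
  using assms by (cases M) (simp add: cM_def conj_inv_id permutes_inverses)

lemma cM_comp:
  assumes "\<phi> permutes B" "\<psi> permutes B"
  shows "cM \<psi> (cM \<phi> M) = cM (\<psi> \<circ> \<phi>) M"
  using assms by (cases M) (simp add: cM_def conj_comp[OF assms])

lemma equiv_R:
  assumes m: "0 < m"
  shows "equiv (rooted_maps_std m) (rooted_map_iso_rel m)"
proof (rule equivI)
  show "rooted_map_iso_rel m \<subseteq> rooted_maps_std m \<times> rooted_maps_std m"
    by (auto simp: rooted_map_iso_rel_def)
  show "refl_on (rooted_maps_std m) (rooted_map_iso_rel m)"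
  proof (rule refl_onI)
    fix x assume x: "x \<in> rooted_maps_std m"
    have "id permutes {0..<2*m} \<and> x = cM id x" by (simp add: cM_id permutes_id)
    then show "(x, x) \<in> rooted_map_iso_rel m" unfolding R_iff[OF m] using x by blast
  qed
  show "sym (rooted_map_iso_rel m)"
  proof (rule symI)
    fix a b assume "(a, b) \<in> rooted_map_iso_rel m"
    then obtain \<phi> where ab: "a \<in> rooted_maps_std m" "b \<in> rooted_maps_std m" and \<phi>: "\<phi> permutes {0..<2*m}" and bd: "b = cM \<phi> a"
      using R_iff[OF m] by blast
    have "a = cM (inv \<phi>) b" using cM_inv[OF \<phi>] bd by simp
    then show "(b, a) \<in> rooted_map_iso_rel m"
      unfolding R_iff[OF m] using permutes_inv[OF \<phi>] ab by blast
  qed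
  show "trans (rooted_map_iso_rel m)"
  proof (rule transI)
    fix a b c assume "(a, b) \<in> rooted_map_iso_rel m" "(b, c) \<in> rooted_map_iso_rel m"
    then obtain \<phi> \<psi> where ac: "a \<in> rooted_maps_std m" "c \<in> rooted_maps_std m" and \<phi>: "\<phi> permutes {0..<2*m}"
      and bd: "b = cM \<phi> a" and \<psi>: "\<psi> permutes {0..<2*m}" and cd: "c = cM \<psi> b"
      using R_iff[OF m] by blast
    have "c = cM (\<psi> \<circ> \<phi>) a" using cM_comp[OF \<phi> \<psi>] bd cd by simp
    then show "(a, c) \<in> rooted_map_iso_rel m"
      unfolding R_iff[OF m] using permutes_compose[OF \<phi> \<psi>] ac by blast
  qed
qed

lemma class_eq:
  assumes m: "0 < m" and M: "M \<in> rooted_maps_std m"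
  shows "rooted_map_iso_rel m `` {M} = (\<lambda>\<phi>. cM \<phi> M) ` {\<phi>. \<phi> permutes {0..<2*m}}"
proof (intro equalityI subsetI)
  fix x assume "x \<in> rooted_map_iso_rel m `` {M}"
  then have "(M, x) \<in> rooted_map_iso_rel m" by simp
  then obtain \<phi> where "\<phi> permutes {0..<2*m}" "x = cM \<phi> M" unfolding R_iff[OF m] by blast
  then show "x \<in> (\<lambda>\<phi>. cM \<phi> M) ` {\<phi>. \<phi> permutes {0..<2*m}}" by blast
next
  fix x assume "x \<in> (\<lambda>\<phi>. cM \<phi> M) ` {\<phi>. \<phi> permutes {0..<2*m}}"
  then obtain \<phi> where \<phi>: "\<phi> permutes {0..<2*m}" and xd: "x = cM \<phi> M" by blast
  then have "x \<in> rooted_maps_std m" using S_conj[OF m M] by simp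
  then have "(M, x) \<in> rooted_map_iso_rel m" unfolding R_iff[OF m] using M \<phi> xd by blast
  then show "x \<in> rooted_map_iso_rel m `` {M}" by simp
qed

lemma inj_cM:
  assumes m: "0 < m" and M: "M \<in> rooted_maps_std m"
  shows "inj_on (\<lambda>\<phi>. cM \<phi> M) {\<phi>. \<phi> permutes {0..<2*m}}"
proof (rule inj_onI)
  let ?B = "{0..<2*m}"
  fix \<phi>1 \<phi>2 assume p1: "\<phi>1 \<in> {\<phi>. \<phi> permutes ?B}" and p2: "\<phi>2 \<in> {\<phi>. \<phi> permutes ?B}"
    and e: "cM \<phi>1 M = cM \<phi>2 M"
  obtain \<sigma> \<alpha> r where Md: "M = (\<sigma>, \<alpha>, r)" by (metis prod.exhaust)
  have mp: "is_map ?B \<sigma> \<alpha>" "r \<in> ?B" using M memS[OF m] Md by auto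
  have p1': "\<phi>1 permutes ?B" and p2': "\<phi>2 permutes ?B" using p1 p2 by auto
  have e': "\<phi>1 \<circ> \<sigma> \<circ> inv \<phi>1 = \<phi>2 \<circ> \<sigma> \<circ> inv \<phi>2" "\<phi>1 \<circ> \<alpha> \<circ> inv \<phi>1 = \<phi>2 \<circ> \<alpha> \<circ> inv \<phi>2" "\<phi>1 r = \<phi>2 r"
    using e by (auto simp: cM_def Md)
  have sp: "\<sigma> permutes ?B" using mp by (simp add: is_map_def)
  have injs: "inj (\<phi>1 \<circ> \<sigma> \<circ> inv \<phi>1)"
    by (rule permutes_inj[OF permutes_compose[OF permutes_inv[OF p1'] permutes_compose[OF sp p1']]])
  have c1: "\<forall>b\<in>?B. \<phi>1 (\<sigma> b) = (\<phi>1 \<circ> \<sigma> \<circ> inv \<phi>1) (\<phi>1 b) \<and> \<phi>1 (\<alpha> b) = (\<phi>1 \<circ> \<alpha> \<circ> inv \<phi>1) (\<phi>1 b)"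
    using conj_commute[OF p1'] by blast
  have c2: "\<forall>b\<in>?B. \<phi>2 (\<sigma> b) = (\<phi>1 \<circ> \<sigma> \<circ> inv \<phi>1) (\<phi>2 b) \<and> \<phi>2 (\<alpha> b) = (\<phi>1 \<circ> \<alpha> \<circ> inv \<phi>1) (\<phi>2 b)"
    unfolding e'(1,2) using conj_commute[OF p2'] by blast
  have agr: "\<forall>y\<in>?B. \<phi>1 y = \<phi>2 y" by (rule agree[OF mp c1 c2 injs e'(3)])
  show "\<phi>1 = \<phi>2"
  proof
    fix x show "\<phi>1 x = \<phi>2 x"
    proof (cases "x \<in> ?B")
      case True then show ?thesis using \<open>\<forall>y\<in>?B. \<phi>1 y = \<phi>2 y\<close> by blast
    next
      case False then show ?thesis using permutes_not_in[OF p1'] permutes_not_in[OF p2'] by simp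
    qed
  qed
qed

lemma varsigma_cM:
  assumes m: "0 < m" and M: "M \<in> rooted_maps_std m" and \<phi>: "\<phi> permutes {0..<2*m}"
  shows "varsigma m (cM \<phi> M) = varsigma m M"
proof -
  obtain \<sigma> \<alpha> r where Md: "M = (\<sigma>, \<alpha>, r)" by (metis prod.exhaust)
  have mp: "is_map {0..<2*m} \<sigma> \<alpha>" using M memS[OF m] Md by auto
  show ?thesis using qt_card_conj[OF \<phi> mp] by (simp add: varsigma_def cM_def Md)
qed

lemma finite_S:
  assumes m: "0 < m"
  shows "finite (rooted_maps_std m)"
proof -
  let ?B = "{0..<2*m}"
  have "rooted_maps_std m \<subseteq> {p. p permutes ?B} \<times> {p. p permutes ?B} \<times> ?B"
  proof
    fix x assume x: "x \<in> rooted_maps_std m"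
    obtain \<sigma> \<alpha> r where xd: "x = (\<sigma>, \<alpha>, r)" by (metis prod.exhaust)
    have "is_map ?B \<sigma> \<alpha>" "r \<in> ?B" using x memS[OF m] xd by auto
    then show "x \<in> {p. p permutes ?B} \<times> {p. p permutes ?B} \<times> ?B" unfolding is_map_def xd by simp
  qed
  moreover have "finite ({p. p permutes ?B} \<times> {p. p permutes ?B} \<times> ?B)"
    by (intro finite_cartesian_product finite_permutations) auto
  ultimately show ?thesis by (rule finite_subset)
qed

lemma dfact_fact: "dfact m * 2 ^ m * fact m = (fact (2*m) :: nat)"
proof (induction m)
  case 0 then show ?case by simp
next
  case (Suc m)
  have "dfact (Suc m) * 2 ^ Suc m * fact (Suc m) = (2*m+1) * (2*m+2) * (dfact m * 2 ^ m * fact m)"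
    by (simp add: algebra_simps)
  also have "\<dots> = (2*m+1) * (2*m+2) * fact (2*m)" using Suc by simp
  also have "\<dots> = fact (2 * Suc m)"
    by (simp add: algebra_simps)
  finally show ?case .
qed

lemma main_pos:
  assumes m: "0 < m"
  shows "(\<Sum>C \<in> rooted_maps_std m // rooted_map_iso_rel m. varsigma m (SOME M. M \<in> C)) = dfact m * 2 ^ m"
proof -
  let ?S = "rooted_maps_std m" and ?R = "rooted_map_iso_rel m" and ?B = "{0..<2*m}"
  have eq: "equiv ?S ?R" by (rule equiv_R[OF m])
  have finS: "finite ?S" by (rule finite_S[OF m])
  have "(\<Sum>M\<in>?S. varsigma m M) = (\<Sum>M\<in>\<Union>(?S // ?R). varsigma m M)"
    using Union_quotient[OF eq] by simp
  also have "\<dots> = (\<Sum>C\<in>?S // ?R. \<Sum>M\<in>C. varsigma m M)"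
  proof (subst sum.Union_disjoint)
    show "\<forall>A\<in>?S // ?R. finite A"
    proof
      fix A assume "A \<in> ?S // ?R"
      then have "A \<subseteq> ?S" using Union_quotient[OF eq] by blast
      then show "finite A" using finS by (rule finite_subset)
    qed
    show "\<forall>A\<in>?S // ?R. \<forall>B\<in>?S // ?R. A \<noteq> B \<longrightarrow> A \<inter> B = {}"
      using quotient_disj[OF eq] by blast
  qed simp
  also have "\<dots> = (\<Sum>C\<in>?S // ?R. fact (2*m) * varsigma m (SOME M. M \<in> C))"
  proof (rule sum.cong[OF refl])
    fix C assume "C \<in> ?S // ?R"
    then obtain M0 where M0: "M0 \<in> ?S" "C = ?R `` {M0}" by (rule quotientE)
    have Cimg: "C = (\<lambda>\<phi>. cM \<phi> M0) ` {\<phi>. \<phi> permutes ?B}" using class_eq[OF m M0(1)] M0(2) by simp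
    have const: "varsigma m M = varsigma m M0" if MC: "M \<in> C" for M
    proof -
      obtain \<phi> where "\<phi> permutes ?B" "M = cM \<phi> M0" using MC Cimg by blast
      then show ?thesis using varsigma_cM[OF m M0(1)] by simp
    qed
    have "M0 \<in> C" using equiv_class_self[OF eq M0(1)] M0(2) by simp
    then have "(SOME M. M \<in> C) \<in> C" by (rule someI)
    then have rep: "varsigma m (SOME M. M \<in> C) = varsigma m M0" by (rule const)
    have cardC: "card C = fact (2*m)"
      using Cimg card_image[OF inj_cM[OF m M0(1)]] card_permutations[of ?B "2*m"] by simp
    have "(\<Sum>M\<in>C. varsigma m M) = (\<Sum>M\<in>C. varsigma m M0)" by (rule sum.cong[OF refl const])
    also have "\<dots> = fact (2*m) * varsigma m M0" using cardC by simp
    finally show "(\<Sum>M\<in>C. varsigma m M) = fact (2*m) * varsigma m (SOME M. M \<in> C)" using rep by simp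
  qed
  also have "\<dots> = fact (2*m) * (\<Sum>C\<in>?S // ?R. varsigma m (SOME M. M \<in> C))"
    by (simp add: sum_distrib_left)
  finally have A: "(\<Sum>M\<in>?S. varsigma m M) = fact (2*m) * (\<Sum>C\<in>?S // ?R. varsigma m (SOME M. M \<in> C))" .
  have "card (QT m) = (\<Sum>M\<in>?S. card ((\<lambda>(\<sigma>, \<alpha>, r). quasi_trees ?B \<sigma> \<alpha>) M))"
    unfolding QT_def by (rule card_SigmaI[OF finS]) (auto simp: qt_finite)
  also have "\<dots> = (\<Sum>M\<in>?S. varsigma m M)"
    by (rule sum.cong[OF refl]) (auto simp: varsigma_def)
  finally have B: "card (QT m) = (\<Sum>M\<in>?S. varsigma m M)" .
  have "card (QT m) = fact (2*m) * (dfact m * 2 ^ m)"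
    using card_QT[OF m] card_cycs[of "2*m"] card_YY[of m] m by (simp add: card_cartesian_product)
  then have "fact (2*m) * (\<Sum>C\<in>?S // ?R. varsigma m (SOME M. M \<in> C)) = fact (2*m) * (dfact m * 2 ^ m)"
    using A B by simp
  then show ?thesis by simp
qed

lemma main_zero:
  "(\<Sum>C \<in> rooted_maps_std 0 // rooted_map_iso_rel 0. varsigma 0 (SOME M. M \<in> C)) = 1"
proof -
  let ?S = "rooted_maps_std 0" and ?R = "rooted_map_iso_rel 0"
  have idS: "(id, id, 0) \<in> ?S"
    by (simp add: rooted_maps_std_def is_rooted_map_def is_map_def)
  have iso0: "rooted_map_iso ({}::nat set) \<sigma> \<alpha> r ({}::nat set) \<sigma>' \<alpha>' r'" for \<sigma> \<alpha> r \<sigma>' \<alpha>' r'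
    unfolding rooted_map_iso_def by (intro exI[of _ id]) simp
  have cl: "?R `` {x} = ?S" if "x \<in> ?S" for x
  proof (intro equalityI subsetI)
    fix y assume "y \<in> ?R `` {x}" then show "y \<in> ?S" unfolding rooted_map_iso_rel_def by blast
  next
    fix y assume y: "y \<in> ?S"
    obtain a b c where xd: "x = (a, b, c)" by (metis prod.exhaust)
    obtain a' b' c' where yd: "y = (a', b', c')" by (metis prod.exhaust)
    have "(x, y) \<in> ?R" using that y iso0 by (simp add: rooted_map_iso_rel_def xd yd)
    then show "y \<in> ?R `` {x}" by simp
  qed
  have "?S // ?R = (\<Union>x\<in>?S. {?S})" unfolding quotient_def using cl by simp
  also have "\<dots> = {?S}" using idS by blast
  finally have "?S // ?R = {?S}" .
  moreover have "varsigma 0 M = 1" if "M \<in> ?S" for M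
  proof -
    obtain \<sigma> \<alpha> r where Md: "M = (\<sigma>, \<alpha>, r)" by (metis prod.exhaust)
    have "quasi_trees {} \<sigma> \<alpha> = {{}}"
      by (auto simp: quasi_trees_def map_edges_def single_cycle_on_def)
    then show ?thesis by (simp add: varsigma_def Md)
  qed
  moreover have "(SOME M. M \<in> ?S) \<in> ?S" using idS by (rule someI)
  ultimately show ?thesis by simp
qed

theorem corollary2:
  fixes m :: nat
  shows "real (\<Sum>C \<in> rooted_maps_std m // rooted_map_iso_rel m. varsigma m (SOME M. M \<in> C))
         = fact (2*m) / fact m"
proof (cases "m = 0")
  case True
  then show ?thesis using main_zero by simp
next
  case False
  then have "(\<Sum>C \<in> rooted_maps_std m // rooted_map_iso_rel m. varsigma m (SOME M. M \<in> C)) = dfact m * 2 ^ m"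
    using main_pos by simp
  moreover have "real (dfact m * 2 ^ m) = fact (2*m) / fact m"
  proof -
    have "real (dfact m * 2 ^ m * fact m) = real (fact (2*m))" by (simp only: dfact_fact)
    then have "real (dfact m * 2 ^ m) * fact m = fact (2*m)" by (simp only: of_nat_mult of_nat_fact)
    then show ?thesis by (simp add: field_simps)
  qed
  ultimately show ?thesis by simp
qed

end
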